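(* Let $G$ be a finite subset of $\mathbf M$ with $\{(\mathbf e_1,f_1),\dots,(\mathbf e_m,f_m)\}\subset G$, and let $(\mathbf u,f)\in\mathbf M$. Suppose that for every critical pair $[t_g(\mathbf v,g),t_h(\mathbf w,h)]$ of $G$ with $\mathrm{lpp}(\mathbf u)\succeq\mathrm{lpp}(t_g\mathbf v)$, the S-polynomial of this critical pair has a standard representation w.r.t. $G$. Then $(\mathbf u,f)$ has a standard representation w.r.t. $G$.
   Context: Let $R=K[x_1,\dots,x_n]$ over a field $K$, $f_1,\dots,f_m\in R$, $\mathbf f=(f_1,\dots,f_m)$, $\mathbf e_i$ the $i$-th unit vector of $R^m$, and $\mathbf M=\{(\mathbf u,f)\in R^m\times R:\mathbf u\cdot\mathbf f=f\}$. Fix an arbitrary term order $\prec$ on the power products of $R$ and an arbitrary term order $\prec$ on the terms $x^\alpha\mathbf e_i$ of $R^m$. $\mathrm{lpp}$ denotes leading power product (leading term for vectors), $\mathrm{lc}$ leading coefficient; $\mathrm{lpp}(0)=0$ is smaller than every nonzero power product/term. For $(\mathbf u,f),(\mathbf v,g)\in\mathbf M$ with $f,g\neq0$, let $t=\mathrm{lcm}(\mathrm{lpp}(f),\mathrm{lpp}(g))$, $t_f=t/\mathrm{lpp}(f)$, $t_g=t/\mathrm{lpp}(g)$; if $\mathrm{lpp}(t_f\mathbf u)\succeq\mathrm{lpp}(t_g\mathbf v)$, then $[t_f(\mathbf u,f),t_g(\mathbf v,g)]$ is a critical pair (of $G$ if both elements lie in $G$) with S-polynomial $t_f(\mathbf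 u,f)-c\,t_g(\mathbf v,g)$, $c=\mathrm{lc}(f)/\mathrm{lc}(g)$. An element $(\mathbf u,f)\in\mathbf M$ has a standard representation w.r.t. $B\subset\mathbf M$ if $(\mathbf u,f)=\sum_{i=1}^s p_i(\mathbf v_i,g_i)$ with $(\mathbf v_i,g_i)\in B$, $p_i\in R$, $\mathrm{lpp}(\mathbf u)\succeq\mathrm{lpp}(p_i\mathbf v_i)$ and $\mathrm{lpp}(f)\succeq\mathrm{lpp}(p_ig_i)$ for all $i$. *)

theory Defs
  imports "HOL-Library.Poly_Mapping"
begin

type_synonym 'v pp = "'v \<Rightarrow>\<^sub>0 nat"
type_synonym ('v, 'k) mpoly = "'v pp \<Rightarrow>\<^sub>0 'k"
(* Vectors in R^m: functions from indices (0..m-1) to polynomials, zero beyond m *)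
type_synonym ('v, 'k) vec = "nat \<Rightarrow> ('v, 'k) mpoly"

definition pp_term_order :: "('v pp \<Rightarrow> 'v pp \<Rightarrow> bool) \<Rightarrow> bool" where
  "pp_term_order ord \<longleftrightarrow>
     (\<forall>s. ord s s) \<and> (\<forall>s t. ord s t \<and> ord t s \<longrightarrow> s = t) \<and>
     (\<forall>s t u. ord s t \<and> ord t u \<longrightarrow> ord s u) \<and> (\<forall>s t. ord s t \<or> ord t s) \<and>
     (\<forall>t. ord 0 t) \<and> (\<forall>s t u. ord s t \<longrightarrow> ord (s + u) (t + u))"

(* term order on module terms x^alpha e_i (represented as pairs (alpha, i)) *)
definition mod_term_order :: "('v pp \<times> nat \<Rightarrow> 'v pp \<times> nat \<Rightarrow> bool) \<Rightarrow> bool" where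
  "mod_term_order ord \<longleftrightarrow>
     (\<forall>s. ord s s) \<and> (\<forall>s t. ord s t \<and> ord t s \<longrightarrow> s = t) \<and>
     (\<forall>s t u. ord s t \<and> ord t u \<longrightarrow> ord s u) \<and> (\<forall>s t. ord s t \<or> ord t s) \<and>
     (\<forall>a i c. ord (a, i) (a + c, i)) \<and>
     (\<forall>a i b j c. ord (a, i) (b, j) \<longrightarrow> ord (a + c, i) (b + c, j))"

definition poly_terms :: "('v, 'k::zero) mpoly \<Rightarrow> 'v pp set" where
  "poly_terms p = Poly_Mapping.keys p"

definition vec_terms :: "('v, 'k::zero) vec \<Rightarrow> ('v pp \<times> nat) set" where
  "vec_terms u = {(a, i). a \<in> Poly_Mapping.keys (u i)}"

definition lt_of :: "('t \<Rightarrow> 't \<Rightarrow> bool) \<Rightarrow> 't set \<Rightarrow> 't" where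
  "lt_of ord T = (THE t. t \<in> T \<and> (\<forall>s\<in>T. ord s t))"

(* lpp(x) \<succeq> lpp(y), where the objects are given by their term sets; lpp(0) is below
   every nonzero term *)
definition lpp_ge :: "('t \<Rightarrow> 't \<Rightarrow> bool) \<Rightarrow> 't set \<Rightarrow> 't set \<Rightarrow> bool" where
  "lpp_ge ord T S \<longleftrightarrow> S = {} \<or> (T \<noteq> {} \<and> ord (lt_of ord S) (lt_of ord T))"

definition lpp :: "('v pp \<Rightarrow> 'v pp \<Rightarrow> bool) \<Rightarrow> ('v, 'k::zero) mpoly \<Rightarrow> 'v pp" where
  "lpp ord p = lt_of ord (Poly_Mapping.keys p)"

definition lc :: "('v pp \<Rightarrow> 'v pp \<Rightarrow> bool) \<Rightarrow> ('v, 'k::zero) mpoly \<Rightarrow> 'k" where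
  "lc ord p = Poly_Mapping.lookup p (lpp ord p)"

definition pp_monom :: "'v pp \<Rightarrow> ('v, 'k::{zero,one}) mpoly" where
  "pp_monom t = Poly_Mapping.single t 1"

definition pp_lcm :: "'v pp \<Rightarrow> 'v pp \<Rightarrow> 'v pp" where
  "pp_lcm s t = s + (t - s)"

definition smul :: "('v, 'k::comm_ring_1) mpoly \<Rightarrow> ('v, 'k) vec \<times> ('v, 'k) mpoly
                     \<Rightarrow> ('v, 'k) vec \<times> ('v, 'k) mpoly" where
  "smul p x = ((\<lambda>i. p * fst x i), p * snd x)"

definition pair_add :: "('v, 'k::comm_ring_1) vec \<times> ('v, 'k) mpoly
                     \<Rightarrow> ('v, 'k) vec \<times> ('v, 'k) mpoly \<Rightarrow> ('v, 'k) vec \<times> ('v, 'k) mpoly" where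
  "pair_add x y = ((\<lambda>i. fst x i + fst y i), snd x + snd y)"

definition pair_diff :: "('v, 'k::comm_ring_1) vec \<times> ('v, 'k) mpoly
                     \<Rightarrow> ('v, 'k) vec \<times> ('v, 'k) mpoly \<Rightarrow> ('v, 'k) vec \<times> ('v, 'k) mpoly" where
  "pair_diff x y = ((\<lambda>i. fst x i - fst y i), snd x - snd y)"

definition Mset :: "nat \<Rightarrow> (nat \<Rightarrow> ('v, 'k::comm_ring_1) mpoly)
                    \<Rightarrow> (('v, 'k) vec \<times> ('v, 'k) mpoly) set" where
  "Mset m fs = {(u, f). (\<forall>i\<ge>m. u i = 0) \<and> (\<Sum>i<m. u i * fs i) = f}"

definition unitv :: "nat \<Rightarrow> ('v, 'k::comm_ring_1) vec" where
  "unitv i = (\<lambda>j. if j = i then 1 else 0)"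

definition std_rep ::
  "('v pp \<Rightarrow> 'v pp \<Rightarrow> bool) \<Rightarrow> ('v pp \<times> nat \<Rightarrow> 'v pp \<times> nat \<Rightarrow> bool)
   \<Rightarrow> (('v, 'k::comm_ring_1) vec \<times> ('v, 'k) mpoly) set
   \<Rightarrow> ('v, 'k) vec \<times> ('v, 'k) mpoly \<Rightarrow> bool" where
  "std_rep ordp ordm B x \<longleftrightarrow>
     (\<exists>ps :: (('v, 'k) mpoly \<times> (('v, 'k) vec \<times> ('v, 'k) mpoly)) list.
        (\<forall>(p, b) \<in> set ps. b \<in> B \<and>
            lpp_ge ordm (vec_terms (fst x)) (vec_terms (fst (smul p b))) \<and>
            lpp_ge ordp (poly_terms (snd x)) (poly_terms (snd (smul p b)))) \<and>
        x = foldr (\<lambda>(p, b) acc. pair_add (smul p b) acc) ps ((\<lambda>_. 0), 0))"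

definition crit_pair ::
  "('v pp \<Rightarrow> 'v pp \<Rightarrow> bool) \<Rightarrow> ('v pp \<times> nat \<Rightarrow> 'v pp \<times> nat \<Rightarrow> bool)
   \<Rightarrow> ('v, 'k::field) vec \<times> ('v, 'k) mpoly \<Rightarrow> ('v, 'k) vec \<times> ('v, 'k) mpoly \<Rightarrow> bool" where
  "crit_pair ordp ordm x y \<longleftrightarrow> snd x \<noteq> 0 \<and> snd y \<noteq> 0 \<and>
     (let t = pp_lcm (lpp ordp (snd x)) (lpp ordp (snd y));
          tx = t - lpp ordp (snd x); ty = t - lpp ordp (snd y)
      in lpp_ge ordm (vec_terms (fst (smul (pp_monom tx) x))) (vec_terms (fst (smul (pp_monom ty) y))))"

definition cp_mult1 :: "('v pp \<Rightarrow> 'v pp \<Rightarrow> bool)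
   \<Rightarrow> ('v, 'k::zero) vec \<times> ('v, 'k) mpoly \<Rightarrow> ('v, 'k) vec \<times> ('v, 'k) mpoly \<Rightarrow> 'v pp" where
  "cp_mult1 ordp x y = pp_lcm (lpp ordp (snd x)) (lpp ordp (snd y)) - lpp ordp (snd x)"

definition spoly ::
  "('v pp \<Rightarrow> 'v pp \<Rightarrow> bool)
   \<Rightarrow> ('v, 'k::field) vec \<times> ('v, 'k) mpoly \<Rightarrow> ('v, 'k) vec \<times> ('v, 'k) mpoly
   \<Rightarrow> ('v, 'k) vec \<times> ('v, 'k) mpoly" where
  "spoly ordp x y =
     (let t = pp_lcm (lpp ordp (snd x)) (lpp ordp (snd y));
          tx = t - lpp ordp (snd x); ty = t - lpp ordp (snd y);
          c = lc ordp (snd x) / lc ordp (snd y)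
      in pair_diff (smul (pp_monom tx) x) (smul (Poly_Mapping.single ty c) y))"

end

theory Submission
  imports Defs Complex_Main
begin


definition lin :: "('t \<Rightarrow> 't \<Rightarrow> bool) \<Rightarrow> bool" where
  "lin ord \<longleftrightarrow> (\<forall>s. ord s s) \<and> (\<forall>s t. ord s t \<and> ord t s \<longrightarrow> s = t) \<and>
     (\<forall>s t u. ord s t \<and> ord t u \<longrightarrow> ord s u) \<and> (\<forall>s t. ord s t \<or> ord t s)"

definition dmn :: "('t \<Rightarrow> 't \<Rightarrow> bool) \<Rightarrow> 't set \<Rightarrow> 't set \<Rightarrow> bool" where
  "dmn ord T S \<longleftrightarrow> (\<forall>s\<in>S. \<exists>t\<in>T. ord s t)"

lemma lin_refl: "lin ord \<Longrightarrow> ord s s" unfolding lin_def by blast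
lemma lin_antisym: "lin ord \<Longrightarrow> ord s t \<Longrightarrow> ord t s \<Longrightarrow> s = t" unfolding lin_def by blast
lemma lin_trans: "lin ord \<Longrightarrow> ord s t \<Longrightarrow> ord t u \<Longrightarrow> ord s u" unfolding lin_def by blast
lemma lin_total: "lin ord \<Longrightarrow> ord s t \<or> ord t s" unfolding lin_def by blast

lemma lin_max_ex:
  assumes "lin ord" "finite S" "S \<noteq> {}"
  shows "\<exists>t\<in>S. \<forall>s\<in>S. ord s t"
  using assms(2,3)
proof (induction S rule: finite_ne_induct)
  case (singleton x) then show ?case using lin_refl[OF assms(1)] by auto
next
  case (insert x F)
  then obtain t where t: "t \<in> F" "\<forall>s\<in>F. ord s t" by auto
  show ?case
  proof (cases "ord x t")
    case True then show ?thesis using t by auto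
  next
    case False
    then have "ord t x" using lin_total[OF assms(1)] by blast
    then show ?thesis using t lin_trans[OF assms(1)] lin_refl[OF assms(1)] by blast
  qed
qed

lemma lt_of_prop:
  assumes "lin ord" "finite S" "S \<noteq> {}"
  shows "lt_of ord S \<in> S \<and> (\<forall>s\<in>S. ord s (lt_of ord S))"
proof -
  obtain t where t: "t \<in> S" "\<forall>s\<in>S. ord s t" using lin_max_ex[OF assms] by blast
  have "lt_of ord S = t" unfolding lt_of_def
  proof (rule the_equality)
    show "t \<in> S \<and> (\<forall>s\<in>S. ord s t)" using t by blast
    fix t' assume "t' \<in> S \<and> (\<forall>s\<in>S. ord s t')"
    then show "t' = t" using t lin_antisym[OF assms(1)] by blast
  qed
  then show ?thesis using t by simp
qed

lemma lpp_ge_iff: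
  assumes "lin ord" "finite T" "finite S"
  shows "lpp_ge ord T S \<longleftrightarrow> dmn ord T S"
proof
  assume a: "lpp_ge ord T S"
  show "dmn ord T S" unfolding dmn_def
  proof
    fix s assume s: "s \<in> S"
    then have ne: "S \<noteq> {}" by auto
    with a have T: "T \<noteq> {}" and le: "ord (lt_of ord S) (lt_of ord T)" by (auto simp: lpp_ge_def)
    have "ord s (lt_of ord S)" using lt_of_prop[OF assms(1,3) ne] s by blast
    then have "ord s (lt_of ord T)" using le lin_trans[OF assms(1)] by blast
    then show "\<exists>t\<in>T. ord s t" using lt_of_prop[OF assms(1,2) T] by blast
  qed
next
  assume d: "dmn ord T S"
  show "lpp_ge ord T S"
  proof (cases "S = {}")
    case True then show ?thesis by (simp add: lpp_ge_def)
  next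
    case False
    then have "lt_of ord S \<in> S" using lt_of_prop[OF assms(1,3)] by blast
    then obtain t where t: "t \<in> T" "ord (lt_of ord S) t" using d by (auto simp: dmn_def)
    then have T: "T \<noteq> {}" by auto
    have "ord t (lt_of ord T)" using lt_of_prop[OF assms(1,2) T] t by blast
    then show ?thesis using t T lin_trans[OF assms(1)] by (auto simp: lpp_ge_def)
  qed
qed

lemma dmn_trans: "lin ord \<Longrightarrow> dmn ord T S \<Longrightarrow> dmn ord S R \<Longrightarrow> dmn ord T R"
  unfolding dmn_def by (meson lin_trans)

lemma dmn_total:
  assumes "lin ord" "finite A" "finite B"
  shows "dmn ord A B \<or> dmn ord B A"
proof (cases "A = {} \<or> B = {}")
  case True then show ?thesis by (auto simp: dmn_def)
next
  case False
  then have a: "lt_of ord A \<in> A \<and> (\<forall>s\<in>A. ord s (lt_of ord A))"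
    and b: "lt_of ord B \<in> B \<and> (\<forall>s\<in>B. ord s (lt_of ord B))"
    using lt_of_prop[OF assms(1)] assms by auto
  show ?thesis
  proof (cases "ord (lt_of ord A) (lt_of ord B)")
    case True then show ?thesis using a b lin_trans[OF assms(1)] unfolding dmn_def by blast
  next
    case False
    then have "ord (lt_of ord B) (lt_of ord A)" using lin_total[OF assms(1)] by blast
    then show ?thesis using a b lin_trans[OF assms(1)] unfolding dmn_def by blast
  qed
qed

lemma lookup_single_mult:
  fixes q :: "('a::cancel_comm_monoid_add \<Rightarrow>\<^sub>0 'k::comm_ring_1)"
  shows "Poly_Mapping.lookup (Poly_Mapping.single a c * q) (a + b) = c * Poly_Mapping.lookup q b"
proof -
  define q' where "q' = q - Poly_Mapping.single b (Poly_Mapping.lookup q b)"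
  have q: "q = Poly_Mapping.single b (Poly_Mapping.lookup q b) + q'" by (simp add: q'_def)
  have nb: "b \<notin> Poly_Mapping.keys q'" by (simp add: q'_def in_keys_iff lookup_minus)
  have "Poly_Mapping.single a c * q = Poly_Mapping.single (a + b) (c * Poly_Mapping.lookup q b) + Poly_Mapping.single a c * q'"
    by (subst q) (simp add: distrib_left mult_single)
  moreover have "a + b \<notin> Poly_Mapping.keys (Poly_Mapping.single a c * q')"
  proof
    assume "a + b \<in> Poly_Mapping.keys (Poly_Mapping.single a c * q')"
    then obtain x y where "x \<in> Poly_Mapping.keys (Poly_Mapping.single a c)" "y \<in> Poly_Mapping.keys q'" "a + b = x + y"
      using keys_mult by blast
    then show False using nb by (auto split: if_splits)
  qed
  ultimately show ?thesis by (simp add: lookup_add in_keys_iff)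
qed

lemma keys_single_mult_sub:
  fixes q :: "('a::cancel_comm_monoid_add \<Rightarrow>\<^sub>0 'k::comm_ring_1)"
  shows "Poly_Mapping.keys (Poly_Mapping.single a c * q) \<subseteq> (\<lambda>b. a + b) ` Poly_Mapping.keys q"
  using keys_mult[of "Poly_Mapping.single a c" q] by (auto split: if_splits)

lemma keys_single_mult:
  fixes q :: "('a::cancel_comm_monoid_add \<Rightarrow>\<^sub>0 'k::field)"
  assumes "c \<noteq> 0"
  shows "Poly_Mapping.keys (Poly_Mapping.single a c * q) = (\<lambda>b. a + b) ` Poly_Mapping.keys q"
proof
  show "Poly_Mapping.keys (Poly_Mapping.single a c * q) \<subseteq> (\<lambda>b. a + b) ` Poly_Mapping.keys q"
    by (rule keys_single_mult_sub)
  show "(\<lambda>b. a + b) ` Poly_Mapping.keys q \<subseteq> Poly_Mapping.keys (Poly_Mapping.single a c * q)"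
    using assms by (auto simp: in_keys_iff lookup_single_mult)
qed

definition compat :: "('a::plus \<Rightarrow> 'a \<Rightarrow> bool) \<Rightarrow> bool" where
  "compat ord \<longleftrightarrow> (\<forall>s t u. ord s t \<longrightarrow> ord (s + u) (t + u))"

lemma lead_mult:
  fixes p w :: "('a::cancel_comm_monoid_add \<Rightarrow>\<^sub>0 'k::field)"
  assumes lin: "lin ord" and cp: "compat ord" and p: "p \<noteq> 0" and w: "w \<noteq> 0"
  defines "Mp \<equiv> lt_of ord (Poly_Mapping.keys p)" and "Mw \<equiv> lt_of ord (Poly_Mapping.keys w)"
  shows "Mp + Mw \<in> Poly_Mapping.keys (p * w)"
proof -
  have Pp: "Mp \<in> Poly_Mapping.keys p \<and> (\<forall>s\<in>Poly_Mapping.keys p. ord s Mp)"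
    unfolding Mp_def by (rule lt_of_prop[OF lin]) (use p in auto)
  have Pw: "Mw \<in> Poly_Mapping.keys w \<and> (\<forall>s\<in>Poly_Mapping.keys w. ord s Mw)"
    unfolding Mw_def by (rule lt_of_prop[OF lin]) (use w in auto)
  have key: "x = Mp \<and> y = Mw" if "ord x Mp" "ord y Mw" "x + y = Mp + Mw" for x y
  proof -
    have 1: "ord (x + y) (Mp + y)" using cp that(1) unfolding compat_def by blast
    have 2: "ord (Mp + y) (Mp + Mw)" using cp that(2) unfolding compat_def by (metis add.commute)
    have "x + y = Mp + y" using lin_antisym[OF lin 1] 2 that(3) by simp
    then have xm: "x = Mp" by simp
    then show ?thesis using that(3) by simp
  qed
  define p' where "p' = p - Poly_Mapping.single Mp (Poly_Mapping.lookup p Mp)"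
  define w' where "w' = w - Poly_Mapping.single Mw (Poly_Mapping.lookup w Mw)"
  have kp': "Poly_Mapping.keys p' \<subseteq> Poly_Mapping.keys p - {Mp}"
    by (auto simp: p'_def in_keys_iff lookup_minus lookup_single)
  have kw': "Poly_Mapping.keys w' \<subseteq> Poly_Mapping.keys w - {Mw}"
    by (auto simp: w'_def in_keys_iff lookup_minus lookup_single)
  have pe: "p = Poly_Mapping.single Mp (Poly_Mapping.lookup p Mp) + p'" by (simp add: p'_def)
  have we: "w = Poly_Mapping.single Mw (Poly_Mapping.lookup w Mw) + w'" by (simp add: w'_def)
  have e1: "p * w = Poly_Mapping.single Mp (Poly_Mapping.lookup p Mp) * w + p' * w"
    by (metis pe distrib_right)
  have e2: "Poly_Mapping.single Mp (Poly_Mapping.lookup p Mp) * w = Poly_Mapping.single (Mp + Mw) (Poly_Mapping.lookup p Mp * Poly_Mapping.lookup w Mw)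
      + Poly_Mapping.single Mp (Poly_Mapping.lookup p Mp) * w'"
    by (metis we distrib_left mult_single)
  have "p * w = Poly_Mapping.single (Mp + Mw) (Poly_Mapping.lookup p Mp * Poly_Mapping.lookup w Mw)
      + Poly_Mapping.single Mp (Poly_Mapping.lookup p Mp) * w' + p' * w"
    using e1 e2 by simp
  moreover have "Mp + Mw \<notin> Poly_Mapping.keys (Poly_Mapping.single Mp (Poly_Mapping.lookup p Mp) * w')"
  proof
    assume "Mp + Mw \<in> Poly_Mapping.keys (Poly_Mapping.single Mp (Poly_Mapping.lookup p Mp) * w')"
    then obtain y where "y \<in> Poly_Mapping.keys w'" "Mp + Mw = Mp + y"
      using keys_single_mult_sub by blast
    then show False using kw' by auto
  qed
  moreover have "Mp + Mw \<notin> Poly_Mapping.keys (p' * w)"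
  proof
    assume "Mp + Mw \<in> Poly_Mapping.keys (p' * w)"
    then obtain x y where xy: "x \<in> Poly_Mapping.keys p'" "y \<in> Poly_Mapping.keys w" "Mp + Mw = x + y"
      using keys_mult by blast
    then have "x = Mp" using key[of x y] Pp Pw kp' by auto
    then show False using xy kp' by auto
  qed
  ultimately have "Poly_Mapping.lookup (p * w) (Mp + Mw) = Poly_Mapping.lookup p Mp * Poly_Mapping.lookup w Mw"
    by (simp add: lookup_add in_keys_iff)
  then show ?thesis using Pp Pw by (simp add: in_keys_iff)
qed

lemma dmn_mult:
  fixes p w :: "('a::cancel_comm_monoid_add \<Rightarrow>\<^sub>0 'k::field)"
  assumes lin: "lin ord" and cp: "compat ord" and a: "a \<in> Poly_Mapping.keys p" and b: "b \<in> Poly_Mapping.keys w"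
  shows "\<exists>g\<in>Poly_Mapping.keys (p * w). ord (a + b) g"
proof -
  have p: "p \<noteq> 0" and w: "w \<noteq> 0" using a b by auto
  define Mp where "Mp = lt_of ord (Poly_Mapping.keys p)"
  define Mw where "Mw = lt_of ord (Poly_Mapping.keys w)"
  have "ord a Mp" unfolding Mp_def using lt_of_prop[OF lin, of "Poly_Mapping.keys p"] a p by auto
  have "ord b Mw" unfolding Mw_def using lt_of_prop[OF lin, of "Poly_Mapping.keys w"] b w by auto
  have "ord (a + b) (Mp + b)" using cp \<open>ord a Mp\<close> unfolding compat_def by blast
  moreover have "ord (Mp + b) (Mp + Mw)" using cp \<open>ord b Mw\<close> unfolding compat_def by (metis add.commute)
  ultimately have "ord (a + b) (Mp + Mw)" using lin_trans[OF lin] by blast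
  then show ?thesis using lead_mult[OF lin cp p w] unfolding Mp_def Mw_def by blast
qed



lemma nat_seq_incsub:
  fixes s :: "nat \<Rightarrow> nat"
  shows "\<exists>g::nat\<Rightarrow>nat. strict_mono g \<and> (\<forall>i j. i \<le> j \<longrightarrow> s (g i) \<le> s (g j))"
proof -
  obtain f where f: "strict_mono f" "monoseq (\<lambda>n. s (f n))" using seq_monosub[of s] by blast
  show ?thesis
  proof (cases "\<forall>m n. m \<le> n \<longrightarrow> s (f m) \<le> s (f n)")
    case True then show ?thesis using f by blast
  next
    case False
    then have dec: "\<forall>m n. m \<le> n \<longrightarrow> s (f n) \<le> s (f m)" using f(2) unfolding monoseq_def by blast
    define M where "M = (LEAST x. x \<in> range (\<lambda>n. s (f n)))"
    have "M \<in> range (\<lambda>n. s (f n))" unfolding M_def by (rule LeastI[of _ "s (f 0)"]) (rule rangeI)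
    then obtain N where N: "s (f N) = M" by auto
    have low: "s (f N) \<le> s (f n)" for n unfolding N M_def by (rule Least_le) (rule rangeI)
    define g where "g = (\<lambda>n. f (n + N))"
    have "strict_mono g" using f(1) unfolding g_def strict_mono_def by simp
    moreover have "s (g i) \<le> s (g j)" if "i \<le> j" for i j
    proof -
      have "s (f (i + N)) \<le> s (f N)" using dec[rule_format, of N "i + N"] by simp
      also have "\<dots> \<le> s (f (j + N))" by (rule low)
      finally show ?thesis unfolding g_def .
    qed
    ultimately show ?thesis by blast
  qed
qed

lemma dickson_sub:
  fixes t :: "nat \<Rightarrow> ('v \<Rightarrow>\<^sub>0 nat)"
  assumes "finite V"
  shows "\<exists>h::nat\<Rightarrow>nat. strict_mono h \<and> (\<forall>i j. i \<le> j \<longrightarrow> (\<forall>v\<in>V. Poly_Mapping.lookup (t (h i)) v \<le> Poly_Mapping.lookup (t (h j)) v))"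
  using assms
proof (induction V rule: finite_induct)
  case empty
  show ?case by (rule exI[of _ "id::nat\<Rightarrow>nat"]) (simp add: strict_mono_def)
next
  case (insert x V)
  then obtain h :: "nat \<Rightarrow> nat" where h: "strict_mono h" "\<forall>i j. i \<le> j \<longrightarrow> (\<forall>v\<in>V. Poly_Mapping.lookup (t (h i)) v \<le> Poly_Mapping.lookup (t (h j)) v)"
    by blast
  obtain g :: "nat \<Rightarrow> nat" where g: "strict_mono g" "\<forall>i j. i \<le> j \<longrightarrow> Poly_Mapping.lookup (t (h (g i))) x \<le> Poly_Mapping.lookup (t (h (g j))) x"
    using nat_seq_incsub[of "\<lambda>n. Poly_Mapping.lookup (t (h n)) x"] by blast
  have "strict_mono (h \<circ> g)" using h(1) g(1) unfolding strict_mono_def by simp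
  moreover have "\<forall>v\<in>insert x V. Poly_Mapping.lookup (t ((h \<circ> g) i)) v \<le> Poly_Mapping.lookup (t ((h \<circ> g) j)) v"
    if "i \<le> j" for i j
  proof -
    have "g i \<le> g j" using g(1) that by (simp add: strict_mono_less_eq)
    then show ?thesis using h(2) g(2) that by auto
  qed
  ultimately show ?case by blast
qed

lemma dickson:
  fixes t :: "nat \<Rightarrow> ('v::finite \<Rightarrow>\<^sub>0 nat)"
  shows "\<exists>i j. i < j \<and> (\<forall>v. Poly_Mapping.lookup (t i) v \<le> Poly_Mapping.lookup (t j) v)"
proof -
  obtain h :: "nat \<Rightarrow> nat" where h: "strict_mono h" "\<forall>i j. i \<le> j \<longrightarrow> (\<forall>v\<in>(UNIV::'v set). Poly_Mapping.lookup (t (h i)) v \<le> Poly_Mapping.lookup (t (h j)) v)"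
    using dickson_sub[of "UNIV::'v set" t] by auto
  have "h (0::nat) < h 1" using h(1) by (simp add: strict_mono_def)
  moreover have "\<forall>v. Poly_Mapping.lookup (t (h 0)) v \<le> Poly_Mapping.lookup (t (h 1)) v"
    using h(2)[rule_format, of 0 1] by simp
  ultimately show ?thesis by blast
qed

lemma ptord_lin: "pp_term_order ord \<Longrightarrow> lin ord"
  unfolding pp_term_order_def lin_def by blast
lemma ptord_compat: "pp_term_order ord \<Longrightarrow> compat ord"
  unfolding pp_term_order_def compat_def by blast
lemma ptord_zero: "pp_term_order ord \<Longrightarrow> ord 0 t"
  unfolding pp_term_order_def by blast

lemma mtord_lin: "mod_term_order ord \<Longrightarrow> lin ord"
  unfolding mod_term_order_def lin_def by blast
lemma mtord_comp_lin: "mod_term_order ord \<Longrightarrow> lin (\<lambda>a b. ord (a, i) (b, i))"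
  unfolding mod_term_order_def lin_def by blast
lemma mtord_comp_compat: "mod_term_order ord \<Longrightarrow> compat (\<lambda>a b. ord (a, i) (b, i))"
  unfolding mod_term_order_def compat_def by blast
lemma mtord_shift: "mod_term_order ord \<Longrightarrow> ord (a, i) (b, j) \<Longrightarrow> ord (a + c, i) (b + c, j)"
  unfolding mod_term_order_def by blast
lemma mtord_up: "mod_term_order ord \<Longrightarrow> ord (a, i) (a + c, i)"
  unfolding mod_term_order_def by blast

lemma pp_le_decomp:
  fixes s t :: "'v \<Rightarrow>\<^sub>0 nat"
  assumes "\<forall>v. Poly_Mapping.lookup s v \<le> Poly_Mapping.lookup t v"
  shows "t = s + (t - s)"
  by (rule poly_mapping_eqI) (use assms in \<open>simp add: lookup_add lookup_minus\<close>)

lemma ptord_div: 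
  fixes s t :: "'v \<Rightarrow>\<^sub>0 nat"
  assumes "pp_term_order ord" "\<forall>v. Poly_Mapping.lookup s v \<le> Poly_Mapping.lookup t v"
  shows "ord s t"
proof -
  have "ord (0 + s) ((t - s) + s)" using ptord_zero[OF assms(1)] ptord_compat[OF assms(1)]
    unfolding compat_def by blast
  then show ?thesis using pp_le_decomp[OF assms(2)] by (simp add: add.commute)
qed

lemma wf_ptord:
  fixes ord :: "('v::finite \<Rightarrow>\<^sub>0 nat) \<Rightarrow> _"
  assumes "pp_term_order ord"
  shows "wf {(s, t). ord s t \<and> s \<noteq> t}"
proof (rule ccontr)
  have lin: "lin ord" by (rule ptord_lin[OF assms])
  assume "\<not> wf {(s, t). ord s t \<and> s \<noteq> t}"
  then obtain f where f: "\<forall>i. ord (f (Suc i)) (f i) \<and> f (Suc i) \<noteq> f i"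
    unfolding wf_iff_no_infinite_down_chain by auto
  have chain: "ord (f (i + Suc k)) (f i) \<and> f (i + Suc k) \<noteq> f i" for i k
  proof (induction k)
    case 0 then show ?case using f by simp
  next
    case (Suc k)
    have a: "ord (f (i + Suc (Suc k))) (f (i + Suc k))" "f (i + Suc (Suc k)) \<noteq> f (i + Suc k)"
      using f[rule_format, of "i + Suc k"] by simp_all
    have "ord (f (i + Suc (Suc k))) (f i)" using a(1) Suc lin_trans[OF lin] by blast
    moreover have "f (i + Suc (Suc k)) \<noteq> f i"
    proof
      assume "f (i + Suc (Suc k)) = f i"
      then have "f (i + Suc k) = f i" using a(1) Suc lin_antisym[OF lin] by metis
      then show False using Suc by simp
    qed
    ultimately show ?case by simp
  qed
  obtain i j where ij: "i < j" "\<forall>v. Poly_Mapping.lookup (f i) v \<le> Poly_Mapping.lookup (f j) v"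
    using dickson[of f] by blast
  have "ord (f i) (f j)" by (rule ptord_div[OF assms ij(2)])
  moreover obtain k where "j = i + Suc k" using ij(1) less_iff_Suc_add by auto
  ultimately show False using chain[of i k] lin_antisym[OF lin] by metis
qed

lemma pp_lcm_shift:
  fixes a1 L1 a2 L2 :: "'v \<Rightarrow>\<^sub>0 nat"
  assumes "a1 + L1 = a2 + L2"
  shows "(a1 + L1 - pp_lcm L1 L2) + (pp_lcm L1 L2 - L1) = a1"
    and "(a1 + L1 - pp_lcm L1 L2) + (pp_lcm L1 L2 - L2) = a2"
    and "(a1 + L1 - pp_lcm L1 L2) + pp_lcm L1 L2 = a1 + L1"
    and "(pp_lcm L1 L2 - L1) + L1 = pp_lcm L1 L2"
    and "(pp_lcm L1 L2 - L2) + L2 = pp_lcm L1 L2"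
proof -
  have e: "Poly_Mapping.lookup a1 v + Poly_Mapping.lookup L1 v = Poly_Mapping.lookup a2 v + Poly_Mapping.lookup L2 v" for v
    using arg_cong[OF assms, of "\<lambda>x. Poly_Mapping.lookup x v"] by (simp add: lookup_add)
  show "(a1 + L1 - pp_lcm L1 L2) + (pp_lcm L1 L2 - L1) = a1"
  proof (rule poly_mapping_eqI)
    fix k show "Poly_Mapping.lookup (a1 + L1 - pp_lcm L1 L2 + (pp_lcm L1 L2 - L1)) k = Poly_Mapping.lookup a1 k"
      using e[of k] by (simp add: lookup_add lookup_minus pp_lcm_def)
  qed
  show "(a1 + L1 - pp_lcm L1 L2) + (pp_lcm L1 L2 - L2) = a2"
  proof (rule poly_mapping_eqI)
    fix k show "Poly_Mapping.lookup (a1 + L1 - pp_lcm L1 L2 + (pp_lcm L1 L2 - L2)) k = Poly_Mapping.lookup a2 k"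
      using e[of k] by (simp add: lookup_add lookup_minus pp_lcm_def)
  qed
  show "(a1 + L1 - pp_lcm L1 L2) + pp_lcm L1 L2 = a1 + L1"
  proof (rule poly_mapping_eqI)
    fix k show "Poly_Mapping.lookup (a1 + L1 - pp_lcm L1 L2 + pp_lcm L1 L2) k = Poly_Mapping.lookup (a1 + L1) k"
      using e[of k] by (simp add: lookup_add lookup_minus pp_lcm_def)
  qed
  show "(pp_lcm L1 L2 - L1) + L1 = pp_lcm L1 L2"
    by (rule poly_mapping_eqI) (simp add: lookup_add lookup_minus pp_lcm_def)
  show "(pp_lcm L1 L2 - L2) + L2 = pp_lcm L1 L2"
    by (rule poly_mapping_eqI) (simp add: lookup_add lookup_minus pp_lcm_def)
qed



lemma fst_smul [simp]: "fst (smul p x) = (\<lambda>i. p * fst x i)" by (simp add: smul_def)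
lemma snd_smul [simp]: "snd (smul p x) = p * snd x" by (simp add: smul_def)
lemma fst_pair_add [simp]: "fst (pair_add x y) = (\<lambda>i. fst x i + fst y i)" by (simp add: pair_add_def)
lemma snd_pair_add [simp]: "snd (pair_add x y) = snd x + snd y" by (simp add: pair_add_def)
lemma fst_pair_diff [simp]: "fst (pair_diff x y) = (\<lambda>i. fst x i - fst y i)" by (simp add: pair_diff_def)
lemma snd_pair_diff [simp]: "snd (pair_diff x y) = snd x - snd y" by (simp add: pair_diff_def)

definition rsum :: "(('v, 'k::comm_ring_1) mpoly \<times> (('v, 'k) vec \<times> ('v, 'k) mpoly)) list \<Rightarrow> ('v, 'k) vec \<times> ('v, 'k) mpoly" where
  "rsum ps = foldr (\<lambda>(p, b) acc. pair_add (smul p b) acc) ps ((\<lambda>_. 0), 0)"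

lemma fst_rsum: "fst (rsum xs) i = sum_list (map (\<lambda>(p, b). p * fst b i) xs)"
  by (induction xs) (auto simp: rsum_def)
lemma snd_rsum: "snd (rsum xs) = sum_list (map (\<lambda>(p, b). p * snd b) xs)"
  by (induction xs) (auto simp: rsum_def)

lemma pair_eqI: "(\<And>i. fst x i = fst y i) \<Longrightarrow> snd x = snd y \<Longrightarrow> x = y"
  by (simp add: prod_eq_iff fun_eq_iff)

lemma rsum_append: "rsum (xs @ ys) = pair_add (rsum xs) (rsum ys)"
  by (rule pair_eqI) (simp_all add: fst_rsum snd_rsum)

lemma sum_list_filter_split: "sum_list (map h xs) = sum_list (map h (filter P xs)) + sum_list (map h (filter (\<lambda>x. \<not> P x) xs))"
  for h :: "_ \<Rightarrow> 'a::comm_monoid_add"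
  by (induction xs) (simp_all add: algebra_simps)

lemma rsum_filter: "rsum xs = pair_add (rsum (filter P xs)) (rsum (filter (\<lambda>x. \<not> P x) xs))"
  by (rule pair_eqI) (simp_all add: fst_rsum snd_rsum sum_list_filter_split[of _ xs P])

lemma rsum_map_same: "rsum (map (\<lambda>a. (h a, w)) xs) = smul (sum_list (map h xs)) w"
  by (rule pair_eqI) (simp_all add: fst_rsum snd_rsum o_def sum_list_mult_const)

lemma rsum_concat: "rsum (concat xss) = foldr pair_add (map rsum xss) ((\<lambda>_. 0), 0)"
  by (induction xss) (simp_all add: rsum_append, simp add: rsum_def)

lemma poly_expand: "q = (\<Sum>a\<in>Poly_Mapping.keys q. Poly_Mapping.single a (Poly_Mapping.lookup q a))"
proof (rule poly_mapping_eqI)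
  fix k
  show "Poly_Mapping.lookup q k = Poly_Mapping.lookup (\<Sum>a\<in>Poly_Mapping.keys q. Poly_Mapping.single a (Poly_Mapping.lookup q a)) k"
    by (simp add: lookup_sum lookup_single when_def in_keys_iff)
qed

definition klist :: "('a \<Rightarrow>\<^sub>0 'b::zero) \<Rightarrow> 'a list" where
  "klist q = (SOME xs. distinct xs \<and> set xs = Poly_Mapping.keys q)"

lemma klist: "distinct (klist q) \<and> set (klist q) = Poly_Mapping.keys q"
  unfolding klist_def by (rule someI_ex) (metis finite_distinct_list finite_keys)

lemma poly_expand_list:
  fixes q :: "('a::cancel_comm_monoid_add \<Rightarrow>\<^sub>0 'k::comm_ring_1)"
  shows "Poly_Mapping.single s k * q = sum_list (map (\<lambda>a. Poly_Mapping.single (s + a) (k * Poly_Mapping.lookup q a)) (klist q))"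
proof -
  have "sum_list (map (\<lambda>a. Poly_Mapping.single (s + a) (k * Poly_Mapping.lookup q a)) (klist q))
      = (\<Sum>a\<in>Poly_Mapping.keys q. Poly_Mapping.single (s + a) (k * Poly_Mapping.lookup q a))"
    using klist[of q] by (metis sum_list_distinct_conv_sum_set)
  also have "\<dots> = (\<Sum>a\<in>Poly_Mapping.keys q. Poly_Mapping.single s k * Poly_Mapping.single a (Poly_Mapping.lookup q a))"
    by (simp add: mult_single)
  also have "\<dots> = Poly_Mapping.single s k * q"
    by (subst (2) poly_expand) (simp add: sum_distrib_left)
  finally show ?thesis by simp
qed

lemma rsum_split_entry:
  "rsum (map (\<lambda>a. (Poly_Mapping.single (s + a) (k * Poly_Mapping.lookup q a), w)) (klist q)) = smul (Poly_Mapping.single s k * q) w"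
  by (simp add: rsum_map_same poly_expand_list[symmetric])

definition splitS where
  "splitS s k qs = concat (map (\<lambda>(q, w). map (\<lambda>a. (Poly_Mapping.single (s + a) (k * Poly_Mapping.lookup q a), w)) (klist q)) qs)"

lemma rsum_splitS: "rsum (splitS s k qs) = smul (Poly_Mapping.single s k) (rsum qs)"
proof (induction qs)
  case Nil then show ?case by (simp add: splitS_def rsum_def smul_def)
next
  case (Cons e qs)
  obtain q w where e: "e = (q, w)" by (cases e)
  have "splitS s k (e # qs) = map (\<lambda>a. (Poly_Mapping.single (s + a) (k * Poly_Mapping.lookup q a), w)) (klist q) @ splitS s k qs"
    by (simp add: splitS_def e)
  then have "rsum (splitS s k (e # qs)) = pair_add (smul (Poly_Mapping.single s k * q) w) (smul (Poly_Mapping.single s k) (rsum qs))"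
    by (simp add: rsum_append rsum_split_entry Cons)
  also have "\<dots> = smul (Poly_Mapping.single s k) (rsum (e # qs))"
    by (rule pair_eqI) (simp_all add: e fst_rsum snd_rsum algebra_simps)
  finally show ?case .
qed

lemma splitS_mem:
  assumes "e \<in> set (splitS s k qs)"
  shows "\<exists>q w a. (q, w) \<in> set qs \<and> a \<in> Poly_Mapping.keys q \<and> e = (Poly_Mapping.single (s + a) (k * Poly_Mapping.lookup q a), w)"
  using assms klist unfolding splitS_def by fastforce

lemma vt_smul_single_sub:
  "vec_terms (fst (smul (Poly_Mapping.single a c) b)) \<subseteq> {(a + \<beta>, i) | \<beta> i. (\<beta>, i) \<in> vec_terms (fst b)}"
  using keys_single_mult_sub unfolding vec_terms_def by fastforce

lemma vt_smul_single:
  fixes b :: "('v, 'k::field) vec \<times> ('v, 'k) mpoly"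
  assumes "c \<noteq> 0"
  shows "vec_terms (fst (smul (Poly_Mapping.single a c) b)) = {(a + \<beta>, i) | \<beta> i. (\<beta>, i) \<in> vec_terms (fst b)}"
  using keys_single_mult[OF assms] unfolding vec_terms_def by fastforce

lemma pt_smul_single_sub:
  "poly_terms (snd (smul (Poly_Mapping.single a c) b)) \<subseteq> (\<lambda>\<beta>. a + \<beta>) ` poly_terms (snd b)"
  using keys_single_mult_sub unfolding poly_terms_def by fastforce

lemma pt_smul_single:
  fixes b :: "('v, 'k::field) vec \<times> ('v, 'k) mpoly"
  assumes "c \<noteq> 0"
  shows "poly_terms (snd (smul (Poly_Mapping.single a c) b)) = (\<lambda>\<beta>. a + \<beta>) ` poly_terms (snd b)"
  using keys_single_mult[OF assms] unfolding poly_terms_def by simp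

lemma finite_vt: 
  assumes "\<forall>i\<ge>m. v i = 0"
  shows "finite (vec_terms v)"
proof -
  have "vec_terms v \<subseteq> (\<Union>i<m. Poly_Mapping.keys (v i) \<times> {i})"
    using assms unfolding vec_terms_def by (auto simp: not_less[symmetric])
  then show ?thesis by (rule finite_subset) auto
qed

lemma finite_pt [simp]: "finite (poly_terms p)" by (simp add: poly_terms_def)



lemma pp_lcm_sub_add:
  fixes L1 L2 :: "'v \<Rightarrow>\<^sub>0 nat"
  shows "(pp_lcm L1 L2 - L1) + L1 = pp_lcm L1 L2" and "(pp_lcm L1 L2 - L2) + L2 = pp_lcm L1 L2"
  by (rule poly_mapping_eqI, simp add: lookup_add lookup_minus pp_lcm_def)+

lemma keys_diff': "Poly_Mapping.keys (a - b) \<subseteq> Poly_Mapping.keys a \<union> Poly_Mapping.keys (b::'a \<Rightarrow>\<^sub>0 'b::ab_group_add)"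
  by (auto simp: in_keys_iff lookup_minus)

lemma lpp_prop:
  assumes "pp_term_order ordp" "g \<noteq> 0"
  shows "lpp ordp g \<in> Poly_Mapping.keys g \<and> (\<forall>\<beta>\<in>Poly_Mapping.keys g. ordp \<beta> (lpp ordp g))"
  unfolding lpp_def by (rule lt_of_prop[OF ptord_lin[OF assms(1)]]) (use assms(2) in auto)

lemma lc_nz:
  assumes "pp_term_order ordp" "g \<noteq> 0"
  shows "lc ordp g \<noteq> 0"
  using lpp_prop[OF assms] unfolding lc_def by (simp add: in_keys_iff)

lemma spoly_eq:
  "spoly ordp x y = pair_diff (smul (Poly_Mapping.single (pp_lcm (lpp ordp (snd x)) (lpp ordp (snd y)) - lpp ordp (snd x)) 1) x)
      (smul (Poly_Mapping.single (pp_lcm (lpp ordp (snd x)) (lpp ordp (snd y)) - lpp ordp (snd y)) (lc ordp (snd x) / lc ordp (snd y))) y)"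
  by (simp add: spoly_def Let_def pp_monom_def)

lemma spoly_pt_lt:
  fixes x y :: "('v, 'k::field) vec \<times> ('v, 'k) mpoly"
  assumes po: "pp_term_order ordp" and gx: "snd x \<noteq> 0" and gy: "snd y \<noteq> 0"
    and z: "\<zeta> \<in> Poly_Mapping.keys (snd (spoly ordp x y))"
  shows "ordp \<zeta> (pp_lcm (lpp ordp (snd x)) (lpp ordp (snd y))) \<and> \<zeta> \<noteq> pp_lcm (lpp ordp (snd x)) (lpp ordp (snd y))"
proof -
  define Lx where "Lx = lpp ordp (snd x)"
  define Ly where "Ly = lpp ordp (snd y)"
  define t where "t = pp_lcm Lx Ly"
  define c where "c = lc ordp (snd x) / lc ordp (snd y)"
  have tx: "(t - Lx) + Lx = t" and ty: "(t - Ly) + Ly = t" unfolding t_def by (rule pp_lcm_sub_add)+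
  have sp: "snd (spoly ordp x y) = Poly_Mapping.single (t - Lx) 1 * snd x - Poly_Mapping.single (t - Ly) c * snd y"
    by (simp add: spoly_eq t_def Lx_def Ly_def c_def)
  have Px: "Lx \<in> Poly_Mapping.keys (snd x) \<and> (\<forall>\<beta>\<in>Poly_Mapping.keys (snd x). ordp \<beta> Lx)"
    unfolding Lx_def by (rule lpp_prop[OF po gx])
  have Py: "Ly \<in> Poly_Mapping.keys (snd y) \<and> (\<forall>\<beta>\<in>Poly_Mapping.keys (snd y). ordp \<beta> Ly)"
    unfolding Ly_def by (rule lpp_prop[OF po gy])
  have cp: "compat ordp" by (rule ptord_compat[OF po])
  have "\<zeta> \<in> Poly_Mapping.keys (Poly_Mapping.single (t - Lx) 1 * snd x) \<union> Poly_Mapping.keys (Poly_Mapping.single (t - Ly) c * snd y)"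
    using keys_diff'[of "Poly_Mapping.single (t - Lx) 1 * snd x" "Poly_Mapping.single (t - Ly) c * snd y"] z unfolding sp by (rule subsetD)
  then have le: "ordp \<zeta> t"
  proof
    assume "\<zeta> \<in> Poly_Mapping.keys (Poly_Mapping.single (t - Lx) 1 * snd x)"
    then obtain \<beta> where "\<beta> \<in> Poly_Mapping.keys (snd x)" "\<zeta> = (t - Lx) + \<beta>" using keys_single_mult_sub by blast
    then have "ordp (\<beta> + (t - Lx)) (Lx + (t - Lx))" "\<zeta> = (t - Lx) + \<beta>"
      using Px cp unfolding compat_def by blast+
    then show ?thesis using tx by (simp add: add.commute)
  next
    assume "\<zeta> \<in> Poly_Mapping.keys (Poly_Mapping.single (t - Ly) c * snd y)"
    then obtain \<beta> where "\<beta> \<in> Poly_Mapping.keys (snd y)" "\<zeta> = (t - Ly) + \<beta>" using keys_single_mult_sub by blast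
    then have "ordp (\<beta> + (t - Ly)) (Ly + (t - Ly))" "\<zeta> = (t - Ly) + \<beta>"
      using Py cp unfolding compat_def by blast+
    then show ?thesis using ty by (simp add: add.commute)
  qed
  have l1: "Poly_Mapping.lookup (Poly_Mapping.single (t - Lx) 1 * snd x) t = lc ordp (snd x)"
  proof -
    have "Poly_Mapping.lookup (Poly_Mapping.single (t - Lx) 1 * snd x) ((t - Lx) + Lx) = 1 * Poly_Mapping.lookup (snd x) Lx"
      by (rule lookup_single_mult)
    then have "Poly_Mapping.lookup (Poly_Mapping.single (t - Lx) 1 * snd x) t = Poly_Mapping.lookup (snd x) Lx"
      by (simp only: tx mult_1)
    then show ?thesis by (simp add: lc_def Lx_def)
  qed
  have l2: "Poly_Mapping.lookup (Poly_Mapping.single (t - Ly) c * snd y) t = c * lc ordp (snd y)"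
  proof -
    have "Poly_Mapping.lookup (Poly_Mapping.single (t - Ly) c * snd y) ((t - Ly) + Ly) = c * Poly_Mapping.lookup (snd y) Ly"
      by (rule lookup_single_mult)
    then have "Poly_Mapping.lookup (Poly_Mapping.single (t - Ly) c * snd y) t = c * Poly_Mapping.lookup (snd y) Ly"
      by (simp only: ty)
    then show ?thesis by (simp add: lc_def Ly_def)
  qed
  have "Poly_Mapping.lookup (snd (spoly ordp x y)) t = lc ordp (snd x) - c * lc ordp (snd y)"
    by (simp only: sp lookup_minus l1 l2)
  also have "\<dots> = 0" unfolding c_def using lc_nz[OF po gy] by simp
  finally have "\<zeta> \<noteq> t" using z by (auto simp: in_keys_iff)
  then show ?thesis using le unfolding t_def Lx_def Ly_def by simp
qed

lemma spoly_vt: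
  fixes x y :: "('v, 'k::field) vec \<times> ('v, 'k) mpoly"
  assumes po: "pp_term_order ordp" and gx: "snd x \<noteq> 0" and gy: "snd y \<noteq> 0"
  shows "vec_terms (fst (spoly ordp x y)) \<subseteq>
    vec_terms (fst (smul (pp_monom (pp_lcm (lpp ordp (snd x)) (lpp ordp (snd y)) - lpp ordp (snd x))) x))
    \<union> vec_terms (fst (smul (pp_monom (pp_lcm (lpp ordp (snd x)) (lpp ordp (snd y)) - lpp ordp (snd y))) y))"
proof -
  define c where "c = lc ordp (snd x) / lc ordp (snd y)"
  have c: "c \<noteq> 0" unfolding c_def using lc_nz[OF po gx] lc_nz[OF po gy] by simp
  define tx where "tx = pp_lcm (lpp ordp (snd x)) (lpp ordp (snd y)) - lpp ordp (snd x)"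
  define ty where "ty = pp_lcm (lpp ordp (snd x)) (lpp ordp (snd y)) - lpp ordp (snd y)"
  have A: "vec_terms (fst (smul (Poly_Mapping.single ty c) y)) = {(ty + \<beta>, i) | \<beta> i. (\<beta>, i) \<in> vec_terms (fst y)}"
    by (rule vt_smul_single[OF c])
  have B: "vec_terms (fst (smul (Poly_Mapping.single ty 1) y)) = {(ty + \<beta>, i) | \<beta> i. (\<beta>, i) \<in> vec_terms (fst y)}"
    by (rule vt_smul_single) simp
  have "vec_terms (fst (smul (Poly_Mapping.single ty c) y)) = vec_terms (fst (smul (Poly_Mapping.single ty 1) y))"
    by (simp only: A B)
  moreover have "vec_terms (fst (spoly ordp x y)) \<subseteq> vec_terms (fst (smul (Poly_Mapping.single tx 1) x)) \<union> vec_terms (fst (smul (Poly_Mapping.single ty c) y))"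
    unfolding spoly_eq vec_terms_def tx_def ty_def c_def using keys_diff' by fastforce
  ultimately show ?thesis by (simp add: pp_monom_def tx_def ty_def)
qed

lemma smul_spoly:
  fixes x y :: "('v, 'k::field) vec \<times> ('v, 'k) mpoly"
  assumes e: "ax + lpp ordp (snd x) = ay + lpp ordp (snd y)"
  defines "s \<equiv> ax + lpp ordp (snd x) - pp_lcm (lpp ordp (snd x)) (lpp ordp (snd y))"
  shows "smul (Poly_Mapping.single s k) (spoly ordp x y)
     = pair_diff (smul (Poly_Mapping.single ax k) x) (smul (Poly_Mapping.single ay (k * (lc ordp (snd x) / lc ordp (snd y)))) y)"
proof -
  note sh = pp_lcm_shift[OF e]
  have 1: "Poly_Mapping.single s k * (Poly_Mapping.single (pp_lcm (lpp ordp (snd x)) (lpp ordp (snd y)) - lpp ordp (snd x)) 1 * p)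
      = Poly_Mapping.single ax k * p" for p :: "('v, 'k) mpoly"
    by (simp add: mult.assoc[symmetric] mult_single s_def sh(1))
  have 2: "Poly_Mapping.single s k * (Poly_Mapping.single (pp_lcm (lpp ordp (snd x)) (lpp ordp (snd y)) - lpp ordp (snd y)) cc * p)
      = Poly_Mapping.single ay (k * cc) * p" for p :: "('v, 'k) mpoly" and cc
    by (simp add: mult.assoc[symmetric] mult_single s_def sh(2))
  show ?thesis
    by (rule pair_eqI) (simp_all add: spoly_eq right_diff_distrib 1 2)
qed



lemma pp_lcm_comm: "pp_lcm (L1::'v \<Rightarrow>\<^sub>0 nat) L2 = pp_lcm L2 L1"
  by (rule poly_mapping_eqI) (simp add: lookup_add lookup_minus pp_lcm_def)

locale lsetting =
  fixes ordp :: "('v::finite) pp \<Rightarrow> 'v pp \<Rightarrow> bool"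
    and ordm :: "'v pp \<times> nat \<Rightarrow> 'v pp \<times> nat \<Rightarrow> bool"
    and m :: nat
    and fs :: "nat \<Rightarrow> ('v, 'k::field) mpoly"
    and G :: "(('v, 'k) vec \<times> ('v, 'k) mpoly) set"
    and u :: "('v, 'k) vec" and f :: "('v, 'k) mpoly"
  assumes po: "pp_term_order ordp"
    and mo: "mod_term_order ordm"
    and finG: "finite G"
    and GM: "G \<subseteq> Mset m fs"
    and unit: "\<forall>i<m. (unitv i, fs i) \<in> G"
    and uM: "(u, f) \<in> Mset m fs"
    and hyp: "\<forall>x\<in>G. \<forall>y\<in>G. crit_pair ordp ordm x y \<and>
           lpp_ge ordm (vec_terms u) (vec_terms (fst (smul (pp_monom (cp_mult1 ordp x y)) x)))
           \<longrightarrow> std_rep ordp ordm G (spoly ordp x y)"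
begin

lemma G_vec: "b \<in> G \<Longrightarrow> \<forall>i\<ge>m. fst b i = 0"
  using GM by (auto simp: Mset_def)

lemma fin_vtG: "b \<in> G \<Longrightarrow> finite (vec_terms (fst (smul p b)))"
  by (rule finite_vt[of m]) (simp add: G_vec)

lemma finU: "finite (vec_terms u)"
  by (rule finite_vt[of m]) (use uM in \<open>simp add: Mset_def\<close>)

lemma fin_vt_spoly: "x \<in> G \<Longrightarrow> y \<in> G \<Longrightarrow> finite (vec_terms (fst (spoly ordp x y)))"
  by (rule finite_vt[of m]) (simp add: spoly_eq G_vec)

definition vok :: "('v, 'k) mpoly \<times> (('v, 'k) vec \<times> ('v, 'k) mpoly) \<Rightarrow> bool" where
  "vok e \<longleftrightarrow> snd e \<in> G \<and> dmn ordm (vec_terms u) (vec_terms (fst (smul (fst e) (snd e))))"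

definition pt :: "('v, 'k) mpoly \<times> (('v, 'k) vec \<times> ('v, 'k) mpoly) \<Rightarrow> 'v pp set" where
  "pt e = poly_terms (snd (smul (fst e) (snd e)))"

definition mono :: "('v, 'k) mpoly \<Rightarrow> bool" where
  "mono p \<longleftrightarrow> (\<exists>a c. p = Poly_Mapping.single a c)"

lemma linm: "lin ordm" by (rule mtord_lin[OF mo])
lemma linp: "lin ordp" by (rule ptord_lin[OF po])

lemma cancel_oriented:
  assumes xG: "x \<in> G" and yG: "y \<in> G" and gx: "snd x \<noteq> 0" and gy: "snd y \<noteq> 0"
    and cr: "crit_pair ordp ordm x y"
    and e: "ax + lpp ordp (snd x) = ay + lpp ordp (snd y)"
    and dx: "dmn ordm (vec_terms u) (vec_terms (fst (smul (Poly_Mapping.single ax 1) x)))"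
  shows "\<exists>S. (\<forall>e\<in>set S. vok e \<and> mono (fst e) \<and>
               (\<forall>t\<in>pt e. ordp t (ax + lpp ordp (snd x)) \<and> t \<noteq> ax + lpp ordp (snd x))) \<and>
             rsum S = pair_diff (smul (Poly_Mapping.single ax k) x)
                 (smul (Poly_Mapping.single ay (k * (lc ordp (snd x) / lc ordp (snd y)))) y)"
proof -
  define Lx where "Lx = lpp ordp (snd x)"
  define Ly where "Ly = lpp ordp (snd y)"
  define tt where "tt = pp_lcm Lx Ly"
  define tx where "tx = tt - Lx"
  define s where "s = ax + Lx - tt"
  note sh = pp_lcm_shift[OF e, folded Lx_def Ly_def tt_def]
  have stx: "s + tx = ax" using sh(1) unfolding s_def tx_def .
  have stt: "s + tt = ax + Lx" using sh(3) unfolding s_def by (simp add: add.commute)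
  have up: "ordm (\<gamma>, i) (\<gamma> + c, i)" for \<gamma> i c by (rule mtord_up[OF mo])
  have shift: "ordm (a, i) (b, j) \<Longrightarrow> ordm (a + c, i) (b + c, j)" for a b i j c by (rule mtord_shift[OF mo])
  have dxa: "\<exists>\<zeta>\<in>vec_terms u. ordm (ax + \<beta>, i) \<zeta>" if "(\<beta>, i) \<in> vec_terms (fst x)" for \<beta> i
  proof -
    have "(ax + \<beta>, i) \<in> vec_terms (fst (smul (Poly_Mapping.single ax 1) x))"
      using vt_smul_single[of 1 ax x] that by auto
    then show ?thesis using dx unfolding dmn_def by blast
  qed
  have dxt: "\<exists>\<zeta>\<in>vec_terms u. ordm (tx + \<beta>, i) \<zeta>" if bi: "(\<beta>, i) \<in> vec_terms (fst x)" for \<beta> i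
  proof -
    obtain \<zeta> where z: "\<zeta> \<in> vec_terms u" "ordm (ax + \<beta>, i) \<zeta>" using dxa[OF bi] by blast
    have "ordm (tx + \<beta>, i) (tx + \<beta> + s, i)" by (rule up)
    moreover have "tx + \<beta> + s = ax + \<beta>" using stx by (simp add: ac_simps)
    ultimately show ?thesis using z lin_trans[OF linm] by metis
  qed
  have cond: "lpp_ge ordm (vec_terms u) (vec_terms (fst (smul (pp_monom (cp_mult1 ordp x y)) x)))"
  proof -
    have "cp_mult1 ordp x y = tx" unfolding cp_mult1_def tx_def tt_def Lx_def Ly_def ..
    moreover have "dmn ordm (vec_terms u) (vec_terms (fst (smul (pp_monom tx) x)))"
      unfolding dmn_def
    proof
      fix z assume "z \<in> vec_terms (fst (smul (pp_monom tx) x))"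
      then obtain \<beta> i where "z = (tx + \<beta>, i)" "(\<beta>, i) \<in> vec_terms (fst x)"
        using vt_smul_single_sub[of tx 1 x] unfolding pp_monom_def by blast
      then show "\<exists>t\<in>vec_terms u. ordm z t" using dxt by blast
    qed
    ultimately show ?thesis using lpp_ge_iff[OF linm finU fin_vtG[OF xG]] by simp
  qed
  then have "std_rep ordp ordm G (spoly ordp x y)" using hyp xG yG cr by blast
  then obtain qs where qs: "\<forall>(q, w)\<in>set qs. w \<in> G \<and>
            lpp_ge ordm (vec_terms (fst (spoly ordp x y))) (vec_terms (fst (smul q w))) \<and>
            lpp_ge ordp (poly_terms (snd (spoly ordp x y))) (poly_terms (snd (smul q w)))"
      and sq: "spoly ordp x y = rsum qs"
    unfolding std_rep_def rsum_def by blast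
  define S where "S = splitS s k qs"
  have "rsum S = smul (Poly_Mapping.single s k) (spoly ordp x y)"
    unfolding S_def rsum_splitS sq ..
  also have "\<dots> = pair_diff (smul (Poly_Mapping.single ax k) x)
                 (smul (Poly_Mapping.single ay (k * (lc ordp (snd x) / lc ordp (snd y)))) y)"
    unfolding s_def tt_def Lx_def Ly_def by (rule smul_spoly[OF e])
  finally have sumS: "rsum S = pair_diff (smul (Poly_Mapping.single ax k) x)
                 (smul (Poly_Mapping.single ay (k * (lc ordp (snd x) / lc ordp (snd y)))) y)" .
  have crd: "dmn ordm (vec_terms (fst (smul (pp_monom tx) x))) (vec_terms (fst (smul (pp_monom (tt - Ly)) y)))"
  proof -
    have "lpp_ge ordm (vec_terms (fst (smul (pp_monom tx) x))) (vec_terms (fst (smul (pp_monom (tt - Ly)) y)))"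
      using cr unfolding crit_pair_def Let_def tx_def tt_def Lx_def Ly_def by blast
    then show ?thesis using lpp_ge_iff[OF linm fin_vtG[OF xG] fin_vtG[OF yG]] by blast
  qed
  have spvt: "vec_terms (fst (spoly ordp x y)) \<subseteq> vec_terms (fst (smul (pp_monom tx) x)) \<union> vec_terms (fst (smul (pp_monom (tt - Ly)) y))"
    using spoly_vt[OF po gx gy] unfolding tx_def tt_def Lx_def Ly_def .
  have good: "vok e \<and> mono (fst e) \<and> (\<forall>t\<in>pt e. ordp t (ax + Lx) \<and> t \<noteq> ax + Lx)" if eS: "e \<in> set S" for e
  proof -
    obtain q w a where qw: "(q, w) \<in> set qs" and a: "a \<in> Poly_Mapping.keys q"
      and e: "e = (Poly_Mapping.single (s + a) (k * Poly_Mapping.lookup q a), w)"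
      using splitS_mem[OF eS[unfolded S_def]] by blast
    have wG: "w \<in> G" using qs qw by auto
    have c1: "lpp_ge ordm (vec_terms (fst (spoly ordp x y))) (vec_terms (fst (smul q w)))"
      and c2: "lpp_ge ordp (poly_terms (snd (spoly ordp x y))) (poly_terms (snd (smul q w)))"
      using qs qw by auto
    have d1: "dmn ordm (vec_terms (fst (spoly ordp x y))) (vec_terms (fst (smul q w)))"
      using c1 lpp_ge_iff[OF linm fin_vt_spoly[OF xG yG] fin_vtG[OF wG]] by blast
    have d2: "dmn ordp (poly_terms (snd (spoly ordp x y))) (poly_terms (snd (smul q w)))"
      using c2 lpp_ge_iff[OF linp finite_pt finite_pt] by blast
    have "dmn ordm (vec_terms u) (vec_terms (fst (smul (fst e) (snd e))))"
      unfolding dmn_def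
    proof
      fix z assume "z \<in> vec_terms (fst (smul (fst e) (snd e)))"
      then obtain \<beta> i where z: "z = (s + a + \<beta>, i)" and bi: "(\<beta>, i) \<in> vec_terms (fst w)"
        using vt_smul_single_sub[of "s + a" "k * Poly_Mapping.lookup q a" w] unfolding e by auto
      have "\<beta> \<in> Poly_Mapping.keys (fst w i)" using bi unfolding vec_terms_def by simp
      then obtain g where g: "g \<in> Poly_Mapping.keys (q * fst w i)" "ordm (a + \<beta>, i) (g, i)"
        using dmn_mult[OF mtord_comp_lin[OF mo] mtord_comp_compat[OF mo] a] by blast
      have "(g, i) \<in> vec_terms (fst (smul q w))" using g(1) unfolding vec_terms_def by simp
      then obtain \<zeta> where \<zeta>: "\<zeta> \<in> vec_terms (fst (spoly ordp x y))" "ordm (g, i) \<zeta>"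
        using d1 unfolding dmn_def by blast
      obtain \<eta> where \<eta>: "\<eta> \<in> vec_terms (fst (smul (pp_monom tx) x))" "ordm \<zeta> \<eta>"
      proof (cases "\<zeta> \<in> vec_terms (fst (smul (pp_monom tx) x))")
        case True then show ?thesis using that lin_refl[OF linm] by blast
      next
        case False
        then have "\<zeta> \<in> vec_terms (fst (smul (pp_monom (tt - Ly)) y))" using spvt \<zeta>(1) by blast
        then show ?thesis using that crd unfolding dmn_def by blast
      qed
      obtain \<beta>' i' where \<eta>e: "\<eta> = (tx + \<beta>', i')" and bi': "(\<beta>', i') \<in> vec_terms (fst x)"
        using \<eta>(1) vt_smul_single_sub[of tx 1 x] unfolding pp_monom_def by blast
      have "ordm (a + \<beta>, i) (tx + \<beta>', i')" using g(2) \<zeta>(2) \<eta>(2) \<eta>e lin_trans[OF linm] by metis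
      then have "ordm (a + \<beta> + s, i) (tx + \<beta>' + s, i')" by (rule shift)
      moreover have "tx + \<beta>' + s = ax + \<beta>'" using stx by (simp add: ac_simps)
      moreover obtain \<zeta>' where "\<zeta>' \<in> vec_terms u" "ordm (ax + \<beta>', i') \<zeta>'" using dxa[OF bi'] by blast
      ultimately have "\<exists>t\<in>vec_terms u. ordm (a + \<beta> + s, i) t"
        using lin_trans[OF linm] by metis
      then show "\<exists>t\<in>vec_terms u. ordm z t" unfolding z by (simp add: ac_simps)
    qed
    moreover have "\<forall>t\<in>pt e. ordp t (ax + Lx) \<and> t \<noteq> ax + Lx"
    proof
      fix t assume "t \<in> pt e"
      then obtain \<beta> where t: "t = s + a + \<beta>" and b: "\<beta> \<in> Poly_Mapping.keys (snd w)"
        using pt_smul_single_sub[of "s + a" "k * Poly_Mapping.lookup q a" w] unfolding pt_def e poly_terms_def by auto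
      obtain g where g: "g \<in> Poly_Mapping.keys (q * snd w)" "ordp (a + \<beta>) g"
        using dmn_mult[OF linp ptord_compat[OF po] a b] by blast
      then obtain \<zeta> where \<zeta>: "\<zeta> \<in> Poly_Mapping.keys (snd (spoly ordp x y))" "ordp g \<zeta>"
        using d2 unfolding dmn_def poly_terms_def by auto
      have lt: "ordp \<zeta> tt \<and> \<zeta> \<noteq> tt" using spoly_pt_lt[OF po gx gy \<zeta>(1)] unfolding tt_def Lx_def Ly_def .
      have le: "ordp (a + \<beta>) tt" using g(2) \<zeta>(2) lt lin_trans[OF linp] by metis
      have ne: "a + \<beta> \<noteq> tt"
      proof
        assume "a + \<beta> = tt"
        then have "ordp tt \<zeta>" using g(2) \<zeta>(2) lin_trans[OF linp] by metis
        then show False using lt lin_antisym[OF linp] by metis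
      qed
      have "ordp (a + \<beta> + s) (tt + s)" using le ptord_compat[OF po] unfolding compat_def by blast
      moreover have "a + \<beta> + s \<noteq> tt + s" using ne by simp
      moreover have "tt + s = ax + Lx" using stt by (simp add: add.commute)
      moreover have "t = a + \<beta> + s" using t by (simp add: ac_simps)
      ultimately show "ordp t (ax + Lx) \<and> t \<noteq> ax + Lx" by simp
    qed
    ultimately show ?thesis using wG unfolding vok_def mono_def e by auto
  qed
  show ?thesis using good sumS unfolding Lx_def by blast
qed

end


lemma rsum_Cons: "rsum ((p, b) # xs) = pair_add (smul p b) (rsum xs)"
  by (simp add: rsum_def)

lemma lookup_sum_list: "Poly_Mapping.lookup (sum_list xs) k = sum_list (map (\<lambda>x. Poly_Mapping.lookup x k) xs)"
  by (induction xs) (simp_all add: lookup_add)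

lemma dmn_mono: "dmn ord T S \<Longrightarrow> S' \<subseteq> S \<Longrightarrow> dmn ord T S'"
  unfolding dmn_def by blast

context lsetting
begin

lemma vt_one:
  fixes b :: "('v, 'k) vec \<times> ('v, 'k) mpoly"
  assumes "c \<noteq> 0"
  shows "vec_terms (fst (smul (Poly_Mapping.single a c) b)) = vec_terms (fst (smul (Poly_Mapping.single a 1) b))"
proof -
  have A: "vec_terms (fst (smul (Poly_Mapping.single a c) b)) = {(a + \<beta>, i) | \<beta> i. (\<beta>, i) \<in> vec_terms (fst b)}"
    by (rule vt_smul_single[OF assms])
  have B: "vec_terms (fst (smul (Poly_Mapping.single a 1) b)) = {(a + \<beta>, i) | \<beta> i. (\<beta>, i) \<in> vec_terms (fst b)}"
    by (rule vt_smul_single) simp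
  show ?thesis by (simp only: A B)
qed

lemma cancel:
  assumes b1G: "b1 \<in> G" and b2G: "b2 \<in> G" and g1: "snd b1 \<noteq> 0" and g2: "snd b2 \<noteq> 0"
    and c1: "c1 \<noteq> 0" and c2: "c2 \<noteq> 0"
    and e: "a1 + lpp ordp (snd b1) = a2 + lpp ordp (snd b2)"
    and v1: "vok (Poly_Mapping.single a1 c1, b1)" and v2: "vok (Poly_Mapping.single a2 c2, b2)"
  shows "\<exists>S. (\<forall>e\<in>set S. vok e \<and> mono (fst e) \<and>
               (\<forall>t\<in>pt e. ordp t (a1 + lpp ordp (snd b1)) \<and> t \<noteq> a1 + lpp ordp (snd b1))) \<and>
             rsum S = pair_diff (smul (Poly_Mapping.single a1 c1) b1)
                 (smul (Poly_Mapping.single a2 (c1 * (lc ordp (snd b1) / lc ordp (snd b2)))) b2)"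
proof -
  have dx1: "dmn ordm (vec_terms u) (vec_terms (fst (smul (Poly_Mapping.single a1 1) b1)))"
    using v1 vt_one[OF c1, of a1 b1] unfolding vok_def by simp
  have dx2: "dmn ordm (vec_terms u) (vec_terms (fst (smul (Poly_Mapping.single a2 1) b2)))"
    using v2 vt_one[OF c2, of a2 b2] unfolding vok_def by simp
  define L1 where "L1 = lpp ordp (snd b1)"
  define L2 where "L2 = lpp ordp (snd b2)"
  define A1 where "A1 = vec_terms (fst (smul (pp_monom (pp_lcm L1 L2 - L1)) b1))"
  define A2 where "A2 = vec_terms (fst (smul (pp_monom (pp_lcm L1 L2 - L2)) b2))"
  have "dmn ordm A1 A2 \<or> dmn ordm A2 A1"
    unfolding A1_def A2_def by (rule dmn_total[OF linm fin_vtG[OF b1G] fin_vtG[OF b2G]])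
  then show ?thesis
  proof
    assume d: "dmn ordm A1 A2"
    have cr: "crit_pair ordp ordm b1 b2"
      unfolding crit_pair_def Let_def using g1 g2 d lpp_ge_iff[OF linm fin_vtG[OF b1G] fin_vtG[OF b2G]]
      unfolding A1_def A2_def L1_def L2_def by blast
    show ?thesis by (rule cancel_oriented[OF b1G b2G g1 g2 cr e dx1])
  next
    assume d: "dmn ordm A2 A1"
    have cr: "crit_pair ordp ordm b2 b1"
      unfolding crit_pair_def Let_def using g1 g2 d lpp_ge_iff[OF linm fin_vtG[OF b2G] fin_vtG[OF b1G]]
      unfolding A1_def A2_def L1_def L2_def by (simp add: pp_lcm_comm)
    define d where "d = c1 * (lc ordp (snd b1) / lc ordp (snd b2))"
    obtain S where S: "\<forall>e\<in>set S. vok e \<and> mono (fst e) \<and>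
               (\<forall>t\<in>pt e. ordp t (a2 + lpp ordp (snd b2)) \<and> t \<noteq> a2 + lpp ordp (snd b2))"
      and sS: "rsum S = pair_diff (smul (Poly_Mapping.single a2 (- d)) b2)
                 (smul (Poly_Mapping.single a1 (- d * (lc ordp (snd b2) / lc ordp (snd b1)))) b1)"
      using cancel_oriented[OF b2G b1G g2 g1 cr e[symmetric] dx2, of "- d"] by blast
    have l1: "lc ordp (snd b1) \<noteq> 0" by (rule lc_nz[OF po g1])
    have l2: "lc ordp (snd b2) \<noteq> 0" by (rule lc_nz[OF po g2])
    have dd: "- d * (lc ordp (snd b2) / lc ordp (snd b1)) = - c1"
      unfolding d_def using l1 l2 by (simp add: field_simps)
    have "rsum S = pair_diff (smul (Poly_Mapping.single a1 c1) b1) (smul (Poly_Mapping.single a2 d) b2)"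
      unfolding sS dd by (rule pair_eqI) (simp_all add: single_uminus algebra_simps)
    then show ?thesis using S e unfolding d_def by auto
  qed
qed

lemma std_of:
  assumes v: "\<forall>e\<in>set es. vok e" and s: "rsum es = (u, f)"
    and d: "\<forall>e\<in>set es. dmn ordp (Poly_Mapping.keys f) (pt e)"
  shows "std_rep ordp ordm G (u, f)"
  unfolding std_rep_def
proof (intro exI conjI)
  show "(u, f) = foldr (\<lambda>(p, b) acc. pair_add (smul p b) acc) es ((\<lambda>_. 0), 0)"
    using s unfolding rsum_def by simp
  show "\<forall>(p, b)\<in>set es. b \<in> G \<and>
            lpp_ge ordm (vec_terms (fst (u, f))) (vec_terms (fst (smul p b))) \<and>
            lpp_ge ordp (poly_terms (snd (u, f))) (poly_terms (snd (smul p b)))"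
  proof (intro ballI, clarify)
    fix p b assume pb: "(p, b) \<in> set es"
    then have bG: "b \<in> G" and dv: "dmn ordm (vec_terms u) (vec_terms (fst (smul p b)))"
      using v unfolding vok_def by auto
    have dp: "dmn ordp (Poly_Mapping.keys f) (pt (p, b))" using d pb by blast
    show "b \<in> G \<and>
            lpp_ge ordm (vec_terms (fst (u, f))) (vec_terms (fst (smul p b))) \<and>
            lpp_ge ordp (poly_terms (snd (u, f))) (poly_terms (snd (smul p b)))"
    proof (intro conjI)
      show "b \<in> G" by (rule bG)
      show "lpp_ge ordm (vec_terms (fst (u, f))) (vec_terms (fst (smul p b)))"
        using dv lpp_ge_iff[OF linm finU fin_vtG[OF bG]] by simp
      show "lpp_ge ordp (poly_terms (snd (u, f))) (poly_terms (snd (smul p b)))"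
        using dp lpp_ge_iff[OF linp finite_pt[of f] finite_pt[of "snd (smul p b)"]] unfolding pt_def poly_terms_def by simp
    qed
  qed
qed

lemma lvl:
  assumes T: "T \<in> pt (Poly_Mapping.single a c, b)" and le: "\<forall>t\<in>pt (Poly_Mapping.single a c, b). ordp t T"
  shows "c \<noteq> 0 \<and> snd b \<noteq> 0 \<and> T = a + lpp ordp (snd b)"
proof -
  have c: "c \<noteq> 0" using T unfolding pt_def poly_terms_def by auto
  have pe: "pt (Poly_Mapping.single a c, b) = (\<lambda>\<beta>. a + \<beta>) ` Poly_Mapping.keys (snd b)"
    using pt_smul_single[OF c, of a b] unfolding pt_def poly_terms_def by simp
  then obtain \<beta> where \<beta>: "\<beta> \<in> Poly_Mapping.keys (snd b)" "T = a + \<beta>" using T by auto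
  then have g: "snd b \<noteq> 0" by auto
  have P: "lpp ordp (snd b) \<in> Poly_Mapping.keys (snd b) \<and> (\<forall>\<beta>\<in>Poly_Mapping.keys (snd b). ordp \<beta> (lpp ordp (snd b)))"
    by (rule lpp_prop[OF po g])
  have 1: "ordp (a + lpp ordp (snd b)) T" using le pe P by auto
  have "ordp (\<beta> + a) (lpp ordp (snd b) + a)" using P \<beta>(1) ptord_compat[OF po] unfolding compat_def by blast
  then have 2: "ordp T (a + lpp ordp (snd b))" using \<beta>(2) by (simp add: add.commute)
  show ?thesis using c g lin_antisym[OF linp 1 2] by simp
qed

end


context lsetting
begin

lemma lookup_rsum_zero:
  "(\<forall>e\<in>set xs. T \<notin> pt e) \<Longrightarrow> Poly_Mapping.lookup (snd (rsum xs)) T = 0"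
proof (induction xs)
  case Nil then show ?case by (simp add: rsum_def)
next
  case (Cons e xs)
  obtain p b where e: "e = (p, b)" by (cases e)
  have "T \<notin> Poly_Mapping.keys (p * snd b)" using Cons.prems unfolding e pt_def poly_terms_def by simp
  then show ?case using Cons unfolding e by (simp add: rsum_Cons lookup_add in_keys_iff)
qed

lemma rsum_single: "rsum [(p, b)] = smul p b"
  by (rule pair_eqI) (simp_all add: rsum_def)

lemma reduce:
  "\<forall>es. (\<forall>e\<in>set es. vok e \<and> mono (fst e)) \<and> rsum es = (u, f) \<and> (\<forall>e\<in>set es. \<forall>t\<in>pt e. ordp t T)
     \<longrightarrow> std_rep ordp ordm G (u, f)"
proof (induction T rule: wf_induct[OF wf_ptord[OF po]])
  case (1 T)
  have outer: "std_rep ordp ordm G (u, f)"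
    if "ordp T' T" "T' \<noteq> T" "\<forall>e\<in>set es. vok e \<and> mono (fst e)" "rsum es = (u, f)" "\<forall>e\<in>set es. \<forall>t\<in>pt e. ordp t T'"
    for T' es
  proof -
    have "(T', T) \<in> {(s, t). ordp s t \<and> s \<noteq> t}" using that(1,2) by simp
    then have "\<forall>es. (\<forall>e\<in>set es. vok e \<and> mono (fst e)) \<and> rsum es = (u, f) \<and> (\<forall>e\<in>set es. \<forall>t\<in>pt e. ordp t T')
     \<longrightarrow> std_rep ordp ordm G (u, f)" by (rule 1[THEN spec, THEN mp])
    then have H: "(\<forall>e\<in>set es. vok e \<and> mono (fst e)) \<and> rsum es = (u, f) \<and> (\<forall>e\<in>set es. \<forall>t\<in>pt e. ordp t T')
     \<longrightarrow> std_rep ordp ordm G (u, f)" by (rule spec)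
    show ?thesis by (rule H[THEN mp, OF conjI[OF that(3) conjI[OF that(4) that(5)]]])
  qed
  let ?P = "\<lambda>e. T \<in> pt e"
  have inner: "\<forall>es. (\<forall>e\<in>set es. vok e \<and> mono (fst e)) \<and> rsum es = (u, f) \<and> (\<forall>e\<in>set es. \<forall>t\<in>pt e. ordp t T)
     \<and> length (filter ?P es) = n \<longrightarrow> std_rep ordp ordm G (u, f)" for n
  proof (induction n rule: less_induct)
    case (less n)
    show ?case
    proof (intro allI impI, elim conjE)
      fix es assume V: "\<forall>e\<in>set es. vok e \<and> mono (fst e)" and Sm: "rsum es = (u, f)"
        and B: "\<forall>e\<in>set es. \<forall>t\<in>pt e. ordp t T" and N: "length (filter ?P es) = n"
      show "std_rep ordp ordm G (u, f)"
      proof (cases "\<exists>\<zeta>\<in>Poly_Mapping.keys f. ordp T \<zeta>")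
        case True
        then obtain \<zeta> where z: "\<zeta> \<in> Poly_Mapping.keys f" "ordp T \<zeta>" by blast
        show ?thesis
        proof (rule std_of)
          show "\<forall>e\<in>set es. vok e" using V by blast
          show "rsum es = (u, f)" by (rule Sm)
          show "\<forall>e\<in>set es. dmn ordp (Poly_Mapping.keys f) (pt e)"
            using B z lin_trans[OF linp] unfolding dmn_def by blast
        qed
      next
        case False
        then have Tf: "Poly_Mapping.lookup f T = 0"
          using lin_refl[OF linp, of T] by (auto simp: in_keys_iff)
        consider (z) "n = 0" | (o) "n = 1" | (t) "n \<ge> 2" by arith
        then show ?thesis
        proof cases
          case z
          then have noT: "\<forall>e\<in>set es. T \<notin> pt e" using N by (simp add: filter_empty_conv)
          define A where "A = (\<Union>e\<in>set es. pt e)"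
          have finA: "finite A" unfolding A_def pt_def by simp
          show ?thesis
          proof (cases "A = {}")
            case True
            show ?thesis
            proof (rule std_of)
              show "\<forall>e\<in>set es. vok e" using V by blast
              show "rsum es = (u, f)" by (rule Sm)
              show "\<forall>e\<in>set es. dmn ordp (Poly_Mapping.keys f) (pt e)"
                using True unfolding A_def dmn_def by blast
            qed
          next
            case False
            define T' where "T' = lt_of ordp A"
            have P: "T' \<in> A \<and> (\<forall>s\<in>A. ordp s T')" unfolding T'_def by (rule lt_of_prop[OF linp finA False])
            then obtain e0 where e0: "e0 \<in> set es" "T' \<in> pt e0" unfolding A_def by blast
            have "ordp T' T" using B e0 by blast
            moreover have "T' \<noteq> T" using noT e0 by blast
            moreover have "\<forall>e\<in>set es. \<forall>t\<in>pt e. ordp t T'" using P unfolding A_def by blast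
            ultimately show ?thesis using outer V Sm by blast
          qed
        next
          case o
          have "length (filter ?P es) = Suc 0" using N o by simp
          then obtain e where L: "filter ?P es = [e]" by (auto simp: length_Suc_conv)
          have "e \<in> set (filter ?P es)" using L by simp
          then have eT: "T \<in> pt e" and ein: "e \<in> set es" by simp_all
          obtain p b where e: "e = (p, b)" by (cases e)
          have "f = snd (rsum (filter ?P es)) + snd (rsum (filter (\<lambda>x. \<not> ?P x) es))"
            using arg_cong[OF rsum_filter[of es ?P], of snd] Sm by simp
          moreover have "Poly_Mapping.lookup (snd (rsum (filter (\<lambda>x. \<not> ?P x) es))) T = 0"
            by (rule lookup_rsum_zero) simp
          moreover have "Poly_Mapping.lookup (snd (rsum (filter ?P es))) T \<noteq> 0"
          proof -
            have "snd (rsum (filter ?P es)) = p * snd b" unfolding L e by (simp add: rsum_Cons rsum_def)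
            then show ?thesis using eT unfolding e pt_def poly_terms_def by (simp add: in_keys_iff)
          qed
          ultimately have "Poly_Mapping.lookup f T \<noteq> 0" by (simp add: lookup_add)
          then show ?thesis using Tf by simp
        next
          case t
          have "Suc (Suc 0) \<le> length (filter ?P es)" using N t by simp
          then obtain e1 e2 L' where L: "filter ?P es = e1 # e2 # L'"
            by (auto simp: Suc_le_length_iff)
          have inL: "x \<in> set (filter ?P es) \<Longrightarrow> x \<in> set es \<and> ?P x" for x by simp
          have e1i: "e1 \<in> set es" "T \<in> pt e1" using inL[of e1] unfolding L by auto
          have e2i: "e2 \<in> set es" "T \<in> pt e2" using inL[of e2] unfolding L by auto
          have L'i: "x \<in> set es \<and> T \<in> pt x" if "x \<in> set L'" for x using inL[of x] that unfolding L by auto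
          obtain a1 c1 where "fst e1 = Poly_Mapping.single a1 c1" using V e1i(1) unfolding mono_def by blast
          then obtain b1 where e1: "e1 = (Poly_Mapping.single a1 c1, b1)" by (cases e1) simp
          obtain a2 c2 where "fst e2 = Poly_Mapping.single a2 c2" using V e2i(1) unfolding mono_def by blast
          then obtain b2 where e2: "e2 = (Poly_Mapping.single a2 c2, b2)" by (cases e2) simp
          have lv1: "c1 \<noteq> 0 \<and> snd b1 \<noteq> 0 \<and> T = a1 + lpp ordp (snd b1)"
            by (rule lvl) (use e1i B in \<open>auto simp: e1\<close>)
          have lv2: "c2 \<noteq> 0 \<and> snd b2 \<noteq> 0 \<and> T = a2 + lpp ordp (snd b2)"
            by (rule lvl) (use e2i B in \<open>auto simp: e2\<close>)
          have v1: "vok (Poly_Mapping.single a1 c1, b1)" using V e1i e1 by auto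
          have v2: "vok (Poly_Mapping.single a2 c2, b2)" using V e2i e2 by auto
          have b1G: "b1 \<in> G" using v1 unfolding vok_def by simp
          have b2G: "b2 \<in> G" using v2 unfolding vok_def by simp
          define d where "d = c1 * (lc ordp (snd b1) / lc ordp (snd b2))"
          obtain S where S: "\<forall>e\<in>set S. vok e \<and> mono (fst e) \<and>
               (\<forall>t\<in>pt e. ordp t (a1 + lpp ordp (snd b1)) \<and> t \<noteq> a1 + lpp ordp (snd b1))"
            and sS: "rsum S = pair_diff (smul (Poly_Mapping.single a1 c1) b1) (smul (Poly_Mapping.single a2 d) b2)"
          proof -
            have ee: "a1 + lpp ordp (snd b1) = a2 + lpp ordp (snd b2)" using lv1 lv2 by simp
            have g1: "snd b1 \<noteq> 0" and c1: "c1 \<noteq> 0" using lv1 by simp_all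
            have g2: "snd b2 \<noteq> 0" and c2: "c2 \<noteq> 0" using lv2 by simp_all
            show ?thesis using cancel[OF b1G b2G g1 g2 c1 c2 ee v1 v2] that unfolding d_def by blast
          qed
          define R where "R = filter (\<lambda>x. \<not> ?P x) es"
          define mg where "mg = (Poly_Mapping.single a2 (c2 + d), b2)"
          define es' where "es' = R @ L' @ [mg] @ S"
          have Rin: "x \<in> set R \<Longrightarrow> x \<in> set es \<and> \<not> ?P x" for x unfolding R_def by simp
          have mg_vt: "vec_terms (fst (smul (fst mg) (snd mg))) \<subseteq> vec_terms (fst (smul (Poly_Mapping.single a2 c2) b2))"
            using vt_smul_single_sub[of a2 "c2 + d" b2] vt_smul_single[of c2 a2 b2] lv2 unfolding mg_def by simp
          have mg_pt: "pt mg \<subseteq> pt e2"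
            using pt_smul_single_sub[of a2 "c2 + d" b2] pt_smul_single[of c2 a2 b2] lv2 unfolding mg_def e2 pt_def by simp
          have V': "\<forall>e\<in>set es'. vok e \<and> mono (fst e)"
          proof
            fix e assume "e \<in> set es'"
            then consider "e \<in> set R" | "e \<in> set L'" | "e = mg" | "e \<in> set S" unfolding es'_def by auto
            then show "vok e \<and> mono (fst e)"
            proof cases
              case 1 then show ?thesis using Rin V by blast
            next
              case 2 then show ?thesis using L'i V by blast
            next
              case 3 then show ?thesis
                using v2 mg_vt dmn_mono unfolding vok_def mono_def mg_def by auto
            next
              case 4 then show ?thesis using S by blast
            qed
          qed
          have B': "\<forall>e\<in>set es'. \<forall>t\<in>pt e. ordp t T"
          proof
            fix e assume "e \<in> set es'"
            then consider "e \<in> set R" | "e \<in> set L'" | "e = mg" | "e \<in> set S" unfolding es'_def by auto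
            then show "\<forall>t\<in>pt e. ordp t T"
            proof cases
              case 1 then show ?thesis using Rin B by blast
            next
              case 2 then show ?thesis using L'i B by blast
            next
              case 3 then show ?thesis using mg_pt B e2i by blast
            next
              case 4 then show ?thesis using S lv1 by auto
            qed
          qed
          have Sm': "rsum es' = (u, f)"
          proof -
            have "rsum es = pair_add (rsum (filter ?P es)) (rsum R)"
              unfolding R_def by (rule rsum_filter)
            also have "\<dots> = pair_add (pair_add (smul (Poly_Mapping.single a1 c1) b1) (pair_add (smul (Poly_Mapping.single a2 c2) b2) (rsum L'))) (rsum R)"
              unfolding L e1 e2 by (simp add: rsum_Cons)
            also have "\<dots> = pair_add (rsum R) (pair_add (rsum L') (pair_add (smul (Poly_Mapping.single a2 (c2 + d)) b2) (rsum S)))"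
              by (rule pair_eqI) (simp_all add: sS single_add algebra_simps)
            also have "\<dots> = rsum es'"
              unfolding es'_def mg_def by (simp add: rsum_append rsum_Cons rsum_single)
            finally show ?thesis using Sm by simp
          qed
          have N': "length (filter ?P es') < n"
          proof -
            have fR: "filter ?P R = []" unfolding R_def by (simp add: filter_empty_conv)
            have fL: "filter ?P L' = L'" using L'i by (simp add: filter_id_conv)
            have fS: "filter ?P S = []" using S lv1 by (auto simp: filter_empty_conv)
            have "length (filter ?P es') \<le> length L' + 1"
              unfolding es'_def by (simp add: fR fL fS)
            moreover have "length L' + 2 = n" using N unfolding L by simp
            ultimately show ?thesis by simp
          qed
          show ?thesis using less.IH[OF N'] V' Sm' B' by blast
        qed
      qed
    qed
  qed
  show ?case using inner by blast
qed

end


lemma fst_rsum_concat: "fst (rsum (concat xss)) i = sum_list (map (\<lambda>xs. fst (rsum xs) i) xss)"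
  by (induction xss) (simp_all add: rsum_append, simp add: rsum_def)

lemma snd_rsum_concat: "snd (rsum (concat xss)) = sum_list (map (\<lambda>xs. snd (rsum xs)) xss)"
  by (induction xss) (simp_all add: rsum_append, simp add: rsum_def)

context lsetting
begin

theorem main: "std_rep ordp ordm G (u, f)"
proof -
  define blk where "blk i = map (\<lambda>a. (Poly_Mapping.single a (Poly_Mapping.lookup (u i) a), (unitv i :: ('v, 'k) vec, fs i))) (klist (u i))" for i :: nat
  define es where "es = concat (map blk [0..<m])"
  have u0: "\<forall>i\<ge>m. u i = 0" and fsum: "(\<Sum>i<m. u i * fs i) = f" using uM by (auto simp: Mset_def)
  have rb: "rsum (blk i) = smul (u i) (unitv i, fs i)" for i
  proof -
    have "Poly_Mapping.single 0 1 * u i = sum_list (map (\<lambda>a. Poly_Mapping.single (0 + a) (1 * Poly_Mapping.lookup (u i) a)) (klist (u i)))"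
      by (rule poly_expand_list)
    then have "sum_list (map (\<lambda>a. Poly_Mapping.single a (Poly_Mapping.lookup (u i) a)) (klist (u i))) = u i"
      by simp
    then show ?thesis unfolding blk_def by (simp add: rsum_map_same)
  qed
  have rs: "rsum es = (u, f)"
  proof (rule pair_eqI)
    fix i
    have "fst (rsum es) i = sum_list (map (\<lambda>j. u j * unitv j i) [0..<m])"
      unfolding es_def fst_rsum_concat by (simp add: rb o_def)
    also have "\<dots> = (\<Sum>j\<in>{0..<m}. u j * unitv j i)"
      by (simp only: sum_set_upt_conv_sum_list_nat[symmetric] set_upt)
    also have "\<dots> = (\<Sum>j\<in>{0..<m}. (if j = i then u i else 0))"
      by (rule sum.cong) (auto simp: unitv_def)
    also have "\<dots> = u i" using u0 by (simp add: not_less)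
    finally show "fst (rsum es) i = fst (u, f) i" by simp
  next
    have "snd (rsum es) = sum_list (map (\<lambda>j. u j * fs j) [0..<m])"
      unfolding es_def snd_rsum_concat by (simp add: rb o_def)
    also have "\<dots> = f" using fsum by (simp add: sum_set_upt_conv_sum_list_nat[symmetric] atLeast0LessThan)
    finally show "snd (rsum es) = snd (u, f)" by simp
  qed
  have V: "\<forall>e\<in>set es. vok e \<and> mono (fst e)"
  proof
    fix e assume "e \<in> set es"
    then obtain i a where i: "i < m" and a: "a \<in> Poly_Mapping.keys (u i)"
      and e: "e = (Poly_Mapping.single a (Poly_Mapping.lookup (u i) a), (unitv i, fs i))"
      unfolding es_def blk_def by (auto simp: klist)
    have "vec_terms (fst (smul (fst e) (snd e))) \<subseteq> {(a, i)}"
    proof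
      fix z assume "z \<in> vec_terms (fst (smul (fst e) (snd e)))"
      then obtain \<beta> j where "z = (a + \<beta>, j)" "(\<beta>, j) \<in> vec_terms (unitv i :: ('v, 'k) vec)"
        using vt_smul_single_sub[of a "Poly_Mapping.lookup (u i) a" "(unitv i :: ('v, 'k) vec, fs i)"] unfolding e fst_conv snd_conv by blast
      then show "z \<in> {(a, i)}" unfolding vec_terms_def unitv_def by (auto split: if_splits)
    qed
    moreover have "(a, i) \<in> vec_terms u" using a unfolding vec_terms_def by simp
    ultimately have "dmn ordm (vec_terms u) (vec_terms (fst (smul (fst e) (snd e))))"
      unfolding dmn_def using lin_refl[OF linm] by blast
    then show "vok e \<and> mono (fst e)" using unit i unfolding vok_def mono_def e by auto
  qed
  define A where "A = (\<Union>e\<in>set es. pt e)"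
  have finA: "finite A" unfolding A_def pt_def by simp
  show ?thesis
  proof (cases "A = {}")
    case True
    show ?thesis
    proof (rule std_of)
      show "\<forall>e\<in>set es. vok e" using V by blast
      show "rsum es = (u, f)" by (rule rs)
      show "\<forall>e\<in>set es. dmn ordp (Poly_Mapping.keys f) (pt e)"
        using True unfolding A_def dmn_def by blast
    qed
  next
    case False
    define T where "T = lt_of ordp A"
    have P: "T \<in> A \<and> (\<forall>s\<in>A. ordp s T)" unfolding T_def by (rule lt_of_prop[OF linp finA False])
    then have B: "\<forall>e\<in>set es. \<forall>t\<in>pt e. ordp t T" unfolding A_def by blast
    have H: "(\<forall>e\<in>set es. vok e \<and> mono (fst e)) \<and> rsum es = (u, f) \<and> (\<forall>e\<in>set es. \<forall>t\<in>pt e. ordp t T)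
     \<longrightarrow> std_rep ordp ordm G (u, f)" by (rule reduce[THEN spec])
    show ?thesis by (rule H[THEN mp, OF conjI[OF V conjI[OF rs B]]])
  qed
qed

end

theorem lemma2:
  fixes ordp :: "('v::finite) pp \<Rightarrow> 'v pp \<Rightarrow> bool"
    and ordm :: "'v pp \<times> nat \<Rightarrow> 'v pp \<times> nat \<Rightarrow> bool"
    and m :: nat
    and fs :: "nat \<Rightarrow> ('v, 'k::field) mpoly"
    and G :: "(('v, 'k) vec \<times> ('v, 'k) mpoly) set"
    and u :: "('v, 'k) vec" and f :: "('v, 'k) mpoly"
  assumes "pp_term_order ordp"
    and "mod_term_order ordm"
    and "finite G"
    and "G \<subseteq> Mset m fs"
    and "\<forall>i<m. (unitv i, fs i) \<in> G"
    and "(u, f) \<in> Mset m fs"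
    and "\<forall>x\<in>G. \<forall>y\<in>G. crit_pair ordp ordm x y \<and>
           lpp_ge ordm (vec_terms u) (vec_terms (fst (smul (pp_monom (cp_mult1 ordp x y)) x)))
           \<longrightarrow> std_rep ordp ordm G (spoly ordp x y)"
  shows "std_rep ordp ordm G (u, f)"
proof -
  have "lsetting ordp ordm m fs G u f" unfolding lsetting_def using assms by blast
  then show ?thesis by (rule lsetting.main)
qed


end
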